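(* There is a tight simplex of $25$ points in $\mathbb{O}\mathbb{P}^2$. In fact, there is such a tight simplex with cyclic symmetry, i.e., one mapped to itself by the isometry of $\mathbb{O}\mathbb{P}^2$ induced by the cyclic shift $\sigma(a,b,c)=(b,c,a)$ (conjugation of projection matrices by the corresponding permutation matrix).
   Context: $\mathbb{O}\mathbb{P}^2$ is the set of $3\times3$ octonionic Hermitian matrices $\Pi$ with $\Pi^2=\Pi$ and $\operatorname{Tr}\Pi=1$ (each of the form $(a,b,c)^t(\bar a,\bar b,\bar c)$), with inner product $\langle A,B\rangle=\operatorname{Re}\operatorname{Tr}(AB)$. A tight simplex of $N$ points in $\mathbb{O}\mathbb{P}^2$ is a set of $N$ distinct points $\Pi_1,\dots,\Pi_N$ with $\langle\Pi_i,\Pi_j\rangle=\frac{N-3}{3(N-1)}$ for all $i\ne j$. *)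

theory Defs
  imports "HOL-Analysis.Analysis" "HOL-Library.Numeral_Type"
begin

text \<open>Quaternions and octonions via the Cayley-Dickson construction
  (a,b)(c,d) = (ac - d* b, da + b c*), (a,b)* = (a*, -b).
  Addition, negation and zero are the componentwise ones on product types.\<close>

type_synonym quat = "complex \<times> complex"
type_synonym oct = "quat \<times> quat"

fun qmul :: "quat \<Rightarrow> quat \<Rightarrow> quat" where
  "qmul (a, b) (c, d) = (a * c - cnj d * b, d * a + b * cnj c)"

fun qconj :: "quat \<Rightarrow> quat" where
  "qconj (a, b) = (cnj a, - b)"

fun omul :: "oct \<Rightarrow> oct \<Rightarrow> oct" where
  "omul (p, q) (r, s) = (qmul p r - qmul (qconj s) q, qmul s p + qmul q (qconj r))"

fun oconj :: "oct \<Rightarrow> oct" where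
  "oconj (p, q) = (qconj p, - q)"

definition ore :: "oct \<Rightarrow> real" where
  "ore x = Re (fst (fst x))"

definition oreal :: "real \<Rightarrow> oct" where
  "oreal r = ((complex_of_real r, 0), (0, 0))"

type_synonym omat = "3 \<Rightarrow> 3 \<Rightarrow> oct"

definition mmul :: "omat \<Rightarrow> omat \<Rightarrow> omat" where
  "mmul A B = (\<lambda>i j. \<Sum>k\<in>UNIV. omul (A i k) (B k j))"

definition mtrace :: "omat \<Rightarrow> oct" where
  "mtrace A = (\<Sum>i\<in>UNIV. A i i)"

definition hermitian :: "omat \<Rightarrow> bool" where
  "hermitian A \<longleftrightarrow> (\<forall>i j. A j i = oconj (A i j))"

definition OP2 :: "omat set" where
  "OP2 = {P. hermitian P \<and> mmul P P = P \<and> mtrace P = oreal 1}"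

definition minner :: "omat \<Rightarrow> omat \<Rightarrow> real" where
  "minner A B = ore (mtrace (mmul A B))"

definition tight_simplex :: "omat set \<Rightarrow> bool" where
  "tight_simplex S \<longleftrightarrow> finite S \<and> S \<subseteq> OP2 \<and>
     (\<forall>A\<in>S. \<forall>B\<in>S. A \<noteq> B \<longrightarrow>
        minner A B = (real (card S) - 3) / (3 * (real (card S) - 1)))"

text \<open>Isometry induced by the cyclic shift sigma(a,b,c) = (b,c,a):
  conjugation P M P^T by the permutation matrix P, i.e. entry (i,j) becomes
  entry (i+1, j+1) (indices mod 3).\<close>
definition cyc_shift :: "omat \<Rightarrow> omat" where
  "cyc_shift M = (\<lambda>i j. M (i + 1) (j + 1))"

end

theory Submission
  imports Defs
begin


definition oc :: "real \<Rightarrow> real \<Rightarrow> real \<Rightarrow> real \<Rightarrow> real \<Rightarrow> real \<Rightarrow> real \<Rightarrow> real \<Rightarrow> oct" where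
  "oc a0 a1 a2 a3 a4 a5 a6 a7 = ((Complex a0 a1, Complex a2 a3), (Complex a4 a5, Complex a6 a7))"

lemma omul_oc: "omul (oc a0 a1 a2 a3 a4 a5 a6 a7) (oc b0 b1 b2 b3 b4 b5 b6 b7) = oc
 (a0*b0 - a1*b1 - a2*b2 - a3*b3 - a4*b4 - a5*b5 - a6*b6 - a7*b7)
 (a0*b1 + a1*b0 + a2*b3 - a3*b2 + a4*b5 - a5*b4 - a6*b7 + a7*b6)
 (a0*b2 - a1*b3 + a2*b0 + a3*b1 + a4*b6 + a5*b7 - a6*b4 - a7*b5)
 (a0*b3 + a1*b2 - a2*b1 + a3*b0 + a4*b7 - a5*b6 + a6*b5 - a7*b4)
 (a0*b4 - a1*b5 - a2*b6 - a3*b7 + a4*b0 + a5*b1 + a6*b2 + a7*b3)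
 (a0*b5 + a1*b4 - a2*b7 + a3*b6 - a4*b1 + a5*b0 - a6*b3 + a7*b2)
 (a0*b6 + a1*b7 + a2*b4 - a3*b5 - a4*b2 + a5*b3 + a6*b0 - a7*b1)
 (a0*b7 - a1*b6 + a2*b5 + a3*b4 - a4*b3 - a5*b2 + a6*b1 + a7*b0)"
  by (simp add: oc_def Complex_simps algebra_simps)

lemma ore_omul_oc: "ore (omul (oc a0 a1 a2 a3 a4 a5 a6 a7) (oc b0 b1 b2 b3 b4 b5 b6 b7)) =
  a0*b0 - a1*b1 - a2*b2 - a3*b3 - a4*b4 - a5*b5 - a6*b6 - a7*b7"
  by (simp add: omul_oc ore_def oc_def)

lemma oconj_oc: "oconj (oc a0 a1 a2 a3 a4 a5 a6 a7) = oc a0 (-a1) (-a2) (-a3) (-a4) (-a5) (-a6) (-a7)"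
  by (simp add: oc_def Complex_simps)

lemma add_oc: "oc a0 a1 a2 a3 a4 a5 a6 a7 + oc b0 b1 b2 b3 b4 b5 b6 b7 =
   oc (a0+b0) (a1+b1) (a2+b2) (a3+b3) (a4+b4) (a5+b5) (a6+b6) (a7+b7)"
  by (simp add: oc_def Complex_simps)

lemma oc_eq: "oc a0 a1 a2 a3 a4 a5 a6 a7 = oc b0 b1 b2 b3 b4 b5 b6 b7 \<longleftrightarrow>
   a0=b0 \<and> a1=b1 \<and> a2=b2 \<and> a3=b3 \<and> a4=b4 \<and> a5=b5 \<and> a6=b6 \<and> a7=b7"
  by (auto simp: oc_def complex_eq_iff)

lemma oreal_oc: "oreal r = oc r 0 0 0 0 0 0 0"
  by (simp add: oreal_def oc_def complex_of_real_def zero_prod_def complex_eq_iff)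

definition mat3 :: "oct \<Rightarrow> oct \<Rightarrow> oct \<Rightarrow> oct \<Rightarrow> oct \<Rightarrow> oct \<Rightarrow> oct \<Rightarrow> oct \<Rightarrow> oct \<Rightarrow> omat" where
  "mat3 a b c d e f g h k = (\<lambda>i j. if i = 0 then (if j = 0 then a else if j = 1 then b else c)
     else if i = 1 then (if j = 0 then d else if j = 1 then e else f)
     else (if j = 0 then g else if j = 1 then h else k))"

lemma ex3: "(x::3) = 0 \<or> x = 1 \<or> x = 2"
  using exhaust_3[of x] by auto

lemma sum3: "(\<Sum>k\<in>(UNIV::3 set). f k) = f 0 + f 1 + f 2"
proof -
  have "(3::3) = 0" by simp
  have "f 3 = f 0" by (rule arg_cong[where f=f]) simp
  then show ?thesis using sum_3[of f] by (simp add: ac_simps)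
qed

lemma mmul_mat3: "mmul (mat3 a b c d e f g h k) (mat3 a' b' c' d' e' f' g' h' k') =
  mat3 (omul a a' + omul b d' + omul c g') (omul a b' + omul b e' + omul c h') (omul a c' + omul b f' + omul c k')
       (omul d a' + omul e d' + omul f g') (omul d b' + omul e e' + omul f h') (omul d c' + omul e f' + omul f k')
       (omul g a' + omul h d' + omul k g') (omul g b' + omul h e' + omul k h') (omul g c' + omul h f' + omul k k')"
  unfolding mmul_def
  apply (intro ext)
  subgoal for i j using ex3[of i] ex3[of j] by (auto simp: sum3 mat3_def)
  done

lemma mtrace_mat3: "mtrace (mat3 a b c d e f g h k) = a + e + k"
  by (simp add: mtrace_def sum3 mat3_def)

lemma minner_mat3: "minner (mat3 a b c d e f g h k) (mat3 a' b' c' d' e' f' g' h' k') =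
  ore (omul a a') + ore (omul b d') + ore (omul c g') + ore (omul d b') + ore (omul e e') + ore (omul f h')
  + ore (omul g c') + ore (omul h f') + ore (omul k k')"
  unfolding minner_def mmul_mat3 mtrace_mat3 by (simp add: ore_def)

lemma mat3_eq: "mat3 a b c d e f g h k = mat3 a' b' c' d' e' f' g' h' k' \<longleftrightarrow>
  a=a' \<and> b=b' \<and> c=c' \<and> d=d' \<and> e=e' \<and> f=f' \<and> g=g' \<and> h=h' \<and> k=k'"
proof
  assume H: "mat3 a b c d e f g h k = mat3 a' b' c' d' e' f' g' h' k'"
  have E: "\<And>i j. mat3 a b c d e f g h k i j = mat3 a' b' c' d' e' f' g' h' k' i j" using H by simp
  show "a=a' \<and> b=b' \<and> c=c' \<and> d=d' \<and> e=e' \<and> f=f' \<and> g=g' \<and> h=h' \<and> k=k'"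
    using E[of 0 0] E[of 0 1] E[of 0 2] E[of 1 0] E[of 1 1] E[of 1 2] E[of 2 0] E[of 2 1] E[of 2 2]
    by (simp add: mat3_def)
qed simp

lemma hermitian_mat3: "hermitian (mat3 a b c d e f g h k) \<longleftrightarrow>
  oconj a = a \<and> oconj b = d \<and> oconj c = g \<and> oconj d = b \<and> oconj e = e \<and> oconj f = h
  \<and> oconj g = c \<and> oconj h = f \<and> oconj k = k"
  unfolding hermitian_def
proof
  assume H: "\<forall>i j. mat3 a b c d e f g h k j i = oconj (mat3 a b c d e f g h k i j)"
  show "oconj a = a \<and> oconj b = d \<and> oconj c = g \<and> oconj d = b \<and> oconj e = e \<and> oconj f = h
  \<and> oconj g = c \<and> oconj h = f \<and> oconj k = k"
    using H[rule_format, of 0 0] H[rule_format, of 0 1] H[rule_format, of 0 2] H[rule_format, of 1 0]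
      H[rule_format, of 1 1] H[rule_format, of 1 2] H[rule_format, of 2 0] H[rule_format, of 2 1] H[rule_format, of 2 2]
    by (simp add: mat3_def)
next
  assume A: "oconj a = a \<and> oconj b = d \<and> oconj c = g \<and> oconj d = b \<and> oconj e = e \<and> oconj f = h
  \<and> oconj g = c \<and> oconj h = f \<and> oconj k = k"
  show "\<forall>i j. mat3 a b c d e f g h k j i = oconj (mat3 a b c d e f g h k i j)"
  proof (intro allI)
    fix i j :: 3
    show "mat3 a b c d e f g h k j i = oconj (mat3 a b c d e f g h k i j)"
      using ex3[of i] ex3[of j] A by (elim disjE) (simp_all add: mat3_def)
  qed
qed

lemma cyc_shift_mat3: "cyc_shift (mat3 a b c d e f g h k) = mat3 e f d h k g b c a"
  unfolding cyc_shift_def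
  apply (intro ext)
  subgoal for i j using ex3[of i] ex3[of j] by (auto simp: mat3_def)
  done


definition Ls :: "omat list" where
  "Ls = [
  (mat3 (oc (1/3) 0 0 0 0 0 0 0) (oc (1/3) 0 0 0 0 0 0 0) (oc (1/3) 0 0 0 0 0 0 0) (oc (1/3) 0 0 0 0 0 0 0) (oc (1/3) 0 0 0 0 0 0 0) (oc (1/3) 0 0 0 0 0 0 0) (oc (1/3) 0 0 0 0 0 0 0) (oc (1/3) 0 0 0 0 0 0 0) (oc (1/3) 0 0 0 0 0 0 0)),
  (mat3 (oc (1/3) 0 0 0 0 0 0 0) (oc (1/8) (5/24) (1/8) (1/24) 0 0 (1/12) (1/6)) (oc (-1/12) 0 (-1/12) (-1/6) (1/12) (-1/6) (1/6) (-1/12)) (oc (1/8) (-5/24) (-1/8) (-1/24) 0 0 (-1/12) (-1/6)) (oc (1/3) 0 0 0 0 0 0 0) (oc (-1/12) 0 (-1/6) (1/12) (1/12) (-1/6) (1/12) (1/6)) (oc (-1/12) 0 (1/12) (1/6) (-1/12) (1/6) (-1/6) (1/12)) (oc (-1/12) 0 (1/6) (-1/12) (-1/12) (1/6) (-1/12) (-1/6)) (oc (1/3) 0 0 0 0 0 0 0)),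
  (mat3 (oc (1/3) 0 0 0 0 0 0 0) (oc (-1/12) 0 (-1/6) (1/12) (1/12) (-1/6) (1/12) (1/6)) (oc (1/8) (-5/24) (-1/8) (-1/24) 0 0 (-1/12) (-1/6)) (oc (-1/12) 0 (1/6) (-1/12) (-1/12) (1/6) (-1/12) (-1/6)) (oc (1/3) 0 0 0 0 0 0 0) (oc (-1/12) 0 (1/12) (1/6) (-1/12) (1/6) (-1/6) (1/12)) (oc (1/8) (5/24) (1/8) (1/24) 0 0 (1/12) (1/6)) (oc (-1/12) 0 (-1/12) (-1/6) (1/12) (-1/6) (1/6) (-1/12)) (oc (1/3) 0 0 0 0 0 0 0)),
  (mat3 (oc (1/3) 0 0 0 0 0 0 0) (oc (-1/12) 0 (1/12) (1/6) (-1/12) (1/6) (-1/6) (1/12)) (oc (-1/12) 0 (1/6) (-1/12) (-1/12) (1/6) (-1/12) (-1/6)) (oc (-1/12) 0 (-1/12) (-1/6) (1/12) (-1/6) (1/6) (-1/12)) (oc (1/3) 0 0 0 0 0 0 0) (oc (1/8) (5/24) (1/8) (1/24) 0 0 (1/12) (1/6)) (oc (-1/12) 0 (-1/6) (1/12) (1/12) (-1/6) (1/12) (1/6)) (oc (1/8) (-5/24) (-1/8) (-1/24) 0 0 (-1/12) (-1/6)) (oc (1/3) 0 0 0 0 0 0 0)),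
  (mat3 (oc (1/3) 0 0 0 0 0 0 0) (oc (1/8) (-5/24) (1/24) (-1/8) (-1/6) (-1/12) 0 0) (oc (-1/12) 0 (-1/12) (-1/6) (1/6) (1/12) (1/12) (1/6)) (oc (1/8) (5/24) (-1/24) (1/8) (1/6) (1/12) 0 0) (oc (1/3) 0 0 0 0 0 0 0) (oc (-1/12) 0 (1/6) (-1/12) (-1/12) (1/6) (1/12) (1/6)) (oc (-1/12) 0 (1/12) (1/6) (-1/6) (-1/12) (-1/12) (-1/6)) (oc (-1/12) 0 (-1/6) (1/12) (1/12) (-1/6) (-1/12) (-1/6)) (oc (1/3) 0 0 0 0 0 0 0)),
  (mat3 (oc (1/3) 0 0 0 0 0 0 0) (oc (-1/12) 0 (1/6) (-1/12) (-1/12) (1/6) (1/12) (1/6)) (oc (1/8) (5/24) (-1/24) (1/8) (1/6) (1/12) 0 0) (oc (-1/12) 0 (-1/6) (1/12) (1/12) (-1/6) (-1/12) (-1/6)) (oc (1/3) 0 0 0 0 0 0 0) (oc (-1/12) 0 (1/12) (1/6) (-1/6) (-1/12) (-1/12) (-1/6)) (oc (1/8) (-5/24) (1/24) (-1/8) (-1/6) (-1/12) 0 0) (oc (-1/12) 0 (-1/12) (-1/6) (1/6) (1/12) (1/12) (1/6)) (oc (1/3) 0 0 0 0 0 0 0)),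
  (mat3 (oc (1/3) 0 0 0 0 0 0 0) (oc (-1/12) 0 (1/12) (1/6) (-1/6) (-1/12) (-1/12) (-1/6)) (oc (-1/12) 0 (-1/6) (1/12) (1/12) (-1/6) (-1/12) (-1/6)) (oc (-1/12) 0 (-1/12) (-1/6) (1/6) (1/12) (1/12) (1/6)) (oc (1/3) 0 0 0 0 0 0 0) (oc (1/8) (-5/24) (1/24) (-1/8) (-1/6) (-1/12) 0 0) (oc (-1/12) 0 (1/6) (-1/12) (-1/12) (1/6) (1/12) (1/6)) (oc (1/8) (5/24) (-1/24) (1/8) (1/6) (1/12) 0 0) (oc (1/3) 0 0 0 0 0 0 0)),
  (mat3 (oc (1/3) 0 0 0 0 0 0 0) (oc (1/8) (5/24) (-1/8) (-1/24) 0 0 (1/6) (-1/12)) (oc (-1/12) 0 (1/12) (1/6) (1/6) (1/12) (-1/12) (-1/6)) (oc (1/8) (-5/24) (1/8) (1/24) 0 0 (-1/6) (1/12)) (oc (1/3) 0 0 0 0 0 0 0) (oc (-1/12) 0 (1/6) (-1/12) (1/6) (1/12) (1/6) (-1/12)) (oc (-1/12) 0 (-1/12) (-1/6) (-1/6) (-1/12) (1/12) (1/6)) (oc (-1/12) 0 (-1/6) (1/12) (-1/6) (-1/12) (-1/6) (1/12)) (oc (1/3) 0 0 0 0 0 0 0)),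
  (mat3 (oc (1/3) 0 0 0 0 0 0 0) (oc (-1/12) 0 (1/6) (-1/12) (1/6) (1/12) (1/6) (-1/12)) (oc (1/8) (-5/24) (1/8) (1/24) 0 0 (-1/6) (1/12)) (oc (-1/12) 0 (-1/6) (1/12) (-1/6) (-1/12) (-1/6) (1/12)) (oc (1/3) 0 0 0 0 0 0 0) (oc (-1/12) 0 (-1/12) (-1/6) (-1/6) (-1/12) (1/12) (1/6)) (oc (1/8) (5/24) (-1/8) (-1/24) 0 0 (1/6) (-1/12)) (oc (-1/12) 0 (1/12) (1/6) (1/6) (1/12) (-1/12) (-1/6)) (oc (1/3) 0 0 0 0 0 0 0)),
  (mat3 (oc (1/3) 0 0 0 0 0 0 0) (oc (-1/12) 0 (-1/12) (-1/6) (-1/6) (-1/12) (1/12) (1/6)) (oc (-1/12) 0 (-1/6) (1/12) (-1/6) (-1/12) (-1/6) (1/12)) (oc (-1/12) 0 (1/12) (1/6) (1/6) (1/12) (-1/12) (-1/6)) (oc (1/3) 0 0 0 0 0 0 0) (oc (1/8) (5/24) (-1/8) (-1/24) 0 0 (1/6) (-1/12)) (oc (-1/12) 0 (1/6) (-1/12) (1/6) (1/12) (1/6) (-1/12)) (oc (1/8) (-5/24) (1/8) (1/24) 0 0 (-1/6) (1/12)) (oc (1/3) 0 0 0 0 0 0 0)),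
  (mat3 (oc (1/3) 0 0 0 0 0 0 0) (oc (1/8) (-5/24) (-1/24) (1/8) (1/12) (-1/6) 0 0) (oc (-1/12) 0 (1/12) (1/6) (-1/12) (1/6) (1/6) (-1/12)) (oc (1/8) (5/24) (1/24) (-1/8) (-1/12) (1/6) 0 0) (oc (1/3) 0 0 0 0 0 0 0) (oc (-1/12) 0 (-1/6) (1/12) (-1/6) (-1/12) (1/6) (-1/12)) (oc (-1/12) 0 (-1/12) (-1/6) (1/12) (-1/6) (-1/6) (1/12)) (oc (-1/12) 0 (1/6) (-1/12) (1/6) (1/12) (-1/6) (1/12)) (oc (1/3) 0 0 0 0 0 0 0)),
  (mat3 (oc (1/3) 0 0 0 0 0 0 0) (oc (-1/12) 0 (-1/6) (1/12) (-1/6) (-1/12) (1/6) (-1/12)) (oc (1/8) (5/24) (1/24) (-1/8) (-1/12) (1/6) 0 0) (oc (-1/12) 0 (1/6) (-1/12) (1/6) (1/12) (-1/6) (1/12)) (oc (1/3) 0 0 0 0 0 0 0) (oc (-1/12) 0 (-1/12) (-1/6) (1/12) (-1/6) (-1/6) (1/12)) (oc (1/8) (-5/24) (-1/24) (1/8) (1/12) (-1/6) 0 0) (oc (-1/12) 0 (1/12) (1/6) (-1/12) (1/6) (1/6) (-1/12)) (oc (1/3) 0 0 0 0 0 0 0)),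
  (mat3 (oc (1/3) 0 0 0 0 0 0 0) (oc (-1/12) 0 (-1/12) (-1/6) (1/12) (-1/6) (-1/6) (1/12)) (oc (-1/12) 0 (1/6) (-1/12) (1/6) (1/12) (-1/6) (1/12)) (oc (-1/12) 0 (1/12) (1/6) (-1/12) (1/6) (1/6) (-1/12)) (oc (1/3) 0 0 0 0 0 0 0) (oc (1/8) (-5/24) (-1/24) (1/8) (1/12) (-1/6) 0 0) (oc (-1/12) 0 (-1/6) (1/12) (-1/6) (-1/12) (1/6) (-1/12)) (oc (1/8) (5/24) (1/24) (-1/8) (-1/12) (1/6) 0 0) (oc (1/3) 0 0 0 0 0 0 0)),
  (mat3 (oc (1/3) 0 0 0 0 0 0 0) (oc (1/8) (5/24) (1/8) (1/24) 0 0 (-1/12) (-1/6)) (oc (-1/12) 0 (-1/12) (-1/6) (-1/12) (1/6) (-1/6) (1/12)) (oc (1/8) (-5/24) (-1/8) (-1/24) 0 0 (1/12) (1/6)) (oc (1/3) 0 0 0 0 0 0 0) (oc (-1/12) 0 (-1/6) (1/12) (-1/12) (1/6) (-1/12) (-1/6)) (oc (-1/12) 0 (1/12) (1/6) (1/12) (-1/6) (1/6) (-1/12)) (oc (-1/12) 0 (1/6) (-1/12) (1/12) (-1/6) (1/12) (1/6)) (oc (1/3) 0 0 0 0 0 0 0)),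
  (mat3 (oc (1/3) 0 0 0 0 0 0 0) (oc (-1/12) 0 (-1/6) (1/12) (-1/12) (1/6) (-1/12) (-1/6)) (oc (1/8) (-5/24) (-1/8) (-1/24) 0 0 (1/12) (1/6)) (oc (-1/12) 0 (1/6) (-1/12) (1/12) (-1/6) (1/12) (1/6)) (oc (1/3) 0 0 0 0 0 0 0) (oc (-1/12) 0 (1/12) (1/6) (1/12) (-1/6) (1/6) (-1/12)) (oc (1/8) (5/24) (1/8) (1/24) 0 0 (-1/12) (-1/6)) (oc (-1/12) 0 (-1/12) (-1/6) (-1/12) (1/6) (-1/6) (1/12)) (oc (1/3) 0 0 0 0 0 0 0)),
  (mat3 (oc (1/3) 0 0 0 0 0 0 0) (oc (-1/12) 0 (1/12) (1/6) (1/12) (-1/6) (1/6) (-1/12)) (oc (-1/12) 0 (1/6) (-1/12) (1/12) (-1/6) (1/12) (1/6)) (oc (-1/12) 0 (-1/12) (-1/6) (-1/12) (1/6) (-1/6) (1/12)) (oc (1/3) 0 0 0 0 0 0 0) (oc (1/8) (5/24) (1/8) (1/24) 0 0 (-1/12) (-1/6)) (oc (-1/12) 0 (-1/6) (1/12) (-1/12) (1/6) (-1/12) (-1/6)) (oc (1/8) (-5/24) (-1/8) (-1/24) 0 0 (1/12) (1/6)) (oc (1/3) 0 0 0 0 0 0 0)),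
  (mat3 (oc (1/3) 0 0 0 0 0 0 0) (oc (1/8) (-5/24) (1/24) (-1/8) (1/6) (1/12) 0 0) (oc (-1/12) 0 (-1/12) (-1/6) (-1/6) (-1/12) (-1/12) (-1/6)) (oc (1/8) (5/24) (-1/24) (1/8) (-1/6) (-1/12) 0 0) (oc (1/3) 0 0 0 0 0 0 0) (oc (-1/12) 0 (1/6) (-1/12) (1/12) (-1/6) (-1/12) (-1/6)) (oc (-1/12) 0 (1/12) (1/6) (1/6) (1/12) (1/12) (1/6)) (oc (-1/12) 0 (-1/6) (1/12) (-1/12) (1/6) (1/12) (1/6)) (oc (1/3) 0 0 0 0 0 0 0)),
  (mat3 (oc (1/3) 0 0 0 0 0 0 0) (oc (-1/12) 0 (1/6) (-1/12) (1/12) (-1/6) (-1/12) (-1/6)) (oc (1/8) (5/24) (-1/24) (1/8) (-1/6) (-1/12) 0 0) (oc (-1/12) 0 (-1/6) (1/12) (-1/12) (1/6) (1/12) (1/6)) (oc (1/3) 0 0 0 0 0 0 0) (oc (-1/12) 0 (1/12) (1/6) (1/6) (1/12) (1/12) (1/6)) (oc (1/8) (-5/24) (1/24) (-1/8) (1/6) (1/12) 0 0) (oc (-1/12) 0 (-1/12) (-1/6) (-1/6) (-1/12) (-1/12) (-1/6)) (oc (1/3) 0 0 0 0 0 0 0)),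
  (mat3 (oc (1/3) 0 0 0 0 0 0 0) (oc (-1/12) 0 (1/12) (1/6) (1/6) (1/12) (1/12) (1/6)) (oc (-1/12) 0 (-1/6) (1/12) (-1/12) (1/6) (1/12) (1/6)) (oc (-1/12) 0 (-1/12) (-1/6) (-1/6) (-1/12) (-1/12) (-1/6)) (oc (1/3) 0 0 0 0 0 0 0) (oc (1/8) (-5/24) (1/24) (-1/8) (1/6) (1/12) 0 0) (oc (-1/12) 0 (1/6) (-1/12) (1/12) (-1/6) (-1/12) (-1/6)) (oc (1/8) (5/24) (-1/24) (1/8) (-1/6) (-1/12) 0 0) (oc (1/3) 0 0 0 0 0 0 0)),
  (mat3 (oc (1/3) 0 0 0 0 0 0 0) (oc (1/8) (5/24) (-1/8) (-1/24) 0 0 (-1/6) (1/12)) (oc (-1/12) 0 (1/12) (1/6) (-1/6) (-1/12) (1/12) (1/6)) (oc (1/8) (-5/24) (1/8) (1/24) 0 0 (1/6) (-1/12)) (oc (1/3) 0 0 0 0 0 0 0) (oc (-1/12) 0 (1/6) (-1/12) (-1/6) (-1/12) (-1/6) (1/12)) (oc (-1/12) 0 (-1/12) (-1/6) (1/6) (1/12) (-1/12) (-1/6)) (oc (-1/12) 0 (-1/6) (1/12) (1/6) (1/12) (1/6) (-1/12)) (oc (1/3) 0 0 0 0 0 0 0)),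
  (mat3 (oc (1/3) 0 0 0 0 0 0 0) (oc (-1/12) 0 (1/6) (-1/12) (-1/6) (-1/12) (-1/6) (1/12)) (oc (1/8) (-5/24) (1/8) (1/24) 0 0 (1/6) (-1/12)) (oc (-1/12) 0 (-1/6) (1/12) (1/6) (1/12) (1/6) (-1/12)) (oc (1/3) 0 0 0 0 0 0 0) (oc (-1/12) 0 (-1/12) (-1/6) (1/6) (1/12) (-1/12) (-1/6)) (oc (1/8) (5/24) (-1/8) (-1/24) 0 0 (-1/6) (1/12)) (oc (-1/12) 0 (1/12) (1/6) (-1/6) (-1/12) (1/12) (1/6)) (oc (1/3) 0 0 0 0 0 0 0)),
  (mat3 (oc (1/3) 0 0 0 0 0 0 0) (oc (-1/12) 0 (-1/12) (-1/6) (1/6) (1/12) (-1/12) (-1/6)) (oc (-1/12) 0 (-1/6) (1/12) (1/6) (1/12) (1/6) (-1/12)) (oc (-1/12) 0 (1/12) (1/6) (-1/6) (-1/12) (1/12) (1/6)) (oc (1/3) 0 0 0 0 0 0 0) (oc (1/8) (5/24) (-1/8) (-1/24) 0 0 (-1/6) (1/12)) (oc (-1/12) 0 (1/6) (-1/12) (-1/6) (-1/12) (-1/6) (1/12)) (oc (1/8) (-5/24) (1/8) (1/24) 0 0 (1/6) (-1/12)) (oc (1/3) 0 0 0 0 0 0 0)),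
  (mat3 (oc (1/3) 0 0 0 0 0 0 0) (oc (1/8) (-5/24) (-1/24) (1/8) (-1/12) (1/6) 0 0) (oc (-1/12) 0 (1/12) (1/6) (1/12) (-1/6) (-1/6) (1/12)) (oc (1/8) (5/24) (1/24) (-1/8) (1/12) (-1/6) 0 0) (oc (1/3) 0 0 0 0 0 0 0) (oc (-1/12) 0 (-1/6) (1/12) (1/6) (1/12) (-1/6) (1/12)) (oc (-1/12) 0 (-1/12) (-1/6) (-1/12) (1/6) (1/6) (-1/12)) (oc (-1/12) 0 (1/6) (-1/12) (-1/6) (-1/12) (1/6) (-1/12)) (oc (1/3) 0 0 0 0 0 0 0)),
  (mat3 (oc (1/3) 0 0 0 0 0 0 0) (oc (-1/12) 0 (-1/6) (1/12) (1/6) (1/12) (-1/6) (1/12)) (oc (1/8) (5/24) (1/24) (-1/8) (1/12) (-1/6) 0 0) (oc (-1/12) 0 (1/6) (-1/12) (-1/6) (-1/12) (1/6) (-1/12)) (oc (1/3) 0 0 0 0 0 0 0) (oc (-1/12) 0 (-1/12) (-1/6) (-1/12) (1/6) (1/6) (-1/12)) (oc (1/8) (-5/24) (-1/24) (1/8) (-1/12) (1/6) 0 0) (oc (-1/12) 0 (1/12) (1/6) (1/12) (-1/6) (-1/6) (1/12)) (oc (1/3) 0 0 0 0 0 0 0)),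
  (mat3 (oc (1/3) 0 0 0 0 0 0 0) (oc (-1/12) 0 (-1/12) (-1/6) (-1/12) (1/6) (1/6) (-1/12)) (oc (-1/12) 0 (1/6) (-1/12) (-1/6) (-1/12) (1/6) (-1/12)) (oc (-1/12) 0 (1/12) (1/6) (1/12) (-1/6) (-1/6) (1/12)) (oc (1/3) 0 0 0 0 0 0 0) (oc (1/8) (-5/24) (-1/24) (1/8) (-1/12) (1/6) 0 0) (oc (-1/12) 0 (-1/6) (1/12) (1/6) (1/12) (-1/6) (1/12)) (oc (1/8) (5/24) (1/24) (-1/8) (1/12) (-1/6) 0 0) (oc (1/3) 0 0 0 0 0 0 0))]"

lemma Ls_distinct: "distinct Ls"
  by (simp add: Ls_def mat3_eq oc_eq)

lemma Ls_card: "card (set Ls) = 25"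
  using Ls_distinct distinct_card[OF Ls_distinct] by (simp add: Ls_def)

lemma Ls_OP2: "set Ls \<subseteq> OP2"
  unfolding Ls_def OP2_def
  by (simp add: hermitian_mat3 oconj_oc oc_eq mmul_mat3 omul_oc add_oc mat3_eq mtrace_mat3 oreal_oc)

lemma Ls_inner: "\<forall>A\<in>set Ls. \<forall>B\<in>set Ls. A \<noteq> B \<longrightarrow> minner A B = 11/36"
  unfolding Ls_def
  by (simp add: minner_mat3 ore_omul_oc)

lemma Ls_shift_sub: "cyc_shift ` set Ls \<subseteq> set Ls"
  unfolding Ls_def
  by (simp add: cyc_shift_mat3)

lemma cyc3: "cyc_shift (cyc_shift (cyc_shift M)) = M"
proof -
  have z: "(3::3) = 0" by simp
  have a: "\<And>i::3. i + 1 + 1 + 1 = i"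
  proof -
    fix i :: 3
    have "i + 1 + 1 + 1 = i + 3" by (simp add: add.assoc)
    also have "\<dots> = i" by (subst z) simp
    finally show "i + 1 + 1 + 1 = i" .
  qed
  show ?thesis unfolding cyc_shift_def a by simp
qed

lemma Ls_shift: "cyc_shift ` set Ls = set Ls"
proof
  show "cyc_shift ` set Ls \<subseteq> set Ls" by (rule Ls_shift_sub)
next
  have "set Ls = cyc_shift ` cyc_shift ` cyc_shift ` set Ls"
    by (simp add: image_image cyc3)
  also have "\<dots> \<subseteq> cyc_shift ` set Ls"
    using Ls_shift_sub by (intro image_mono) (meson image_mono order_trans)
  finally show "set Ls \<subseteq> cyc_shift ` set Ls" .
qed

theorem theorem5p6:
  shows "\<exists>S. card S = 25 \<and> tight_simplex S \<and> cyc_shift ` S = S"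
proof (intro exI conjI)
  show "card (set Ls) = 25" by (rule Ls_card)
  show "cyc_shift ` set Ls = set Ls" by (rule Ls_shift)
  show "tight_simplex (set Ls)"
    unfolding tight_simplex_def Ls_card
    using Ls_OP2 Ls_inner by simp
qed

end
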